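(* For one-sided matching with unit-sum valuations, the algorithm FirstPositionAdaptive (FPA) makes at most two value queries per agent and has distortion $O(n^{2/3}\sqrt{\log n})$.
   Context: One-sided matching: there is a set $N$ of $n$ agents and a set $A$ of $n$ items. Each agent $i$ has a valuation function $v_i:A\to\mathbb{R}_{\ge0}$ with $\sum_j v_i(j)=1$. Agents report strict rankings consistent with values (if $a\succ_i b$ then $v_i(a)\ge v_i(b)$), and value queries return $v_i(j)$. A matching is a bijection $N\to A$ with welfare $\sum_i v_i(y_i)$. Distortion is the supremum over unit-sum profiles of optimal welfare divided by the welfare of the output. Assume $n$ is such that $n^{1/3}$ and $\frac14 n^{1/3}$ are integers. "Position $\ell$" of agent $i$ refers to the $\ell$-th item in $\succ_i$. Algorithm FPA: - Query every agent $i$ for her top item $j_i^*$; let $v_i^*$ be its value. All agents start active. - Case 1: $\max_i v_i^*\ge n^{-1/3}$. For $\ell=1,\dots,n$ in order: while there exists a partial matching $Y_p$ of size at least $n^{1/3}/\sqrt{\log n}$ that matches active agents $i$ to distinct items $y_i$ which $i$ ranks at some position $\le\ell$, query each such $i$ for $y_i$ and make these agents inactive (ties broken arbitrarily). Then output a matching maximizing welfare with respect to the revealed values, where unqueried pairs count as $0$. - Case 2: $\max_i v_i^*<n^{-1/3}$. Query each agent $i$ for the item at position $n^{1/3}+1$; call its value $u_i$. Define $\tilde v_i(j_i^* )=v_i^*$, $\tilde v_i(j)=u_i$ for items at positions $2,\dots,n^{1/3}+1$, and $\tilde v_i(j)=0$ for items at positions $\ge n^{1/3}+2$. For every agent with $u_i<\frac12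 n^{-1}$, redefine $\tilde v_i(j)=\frac13 n^{-1/3}$ for items at positions $2,\dots,\frac14 n^{1/3}$. Output a matching maximizing $\sum_i\tilde v_i(y_i)$. *)

theory Defs
  imports Complex_Main
begin

text \<open>Agents and items are both the set {..<n}.  The ranking of agent i is given by
  pos i :: nat => nat, where pos i l is the item at position l (positions 1..n).\<close>

definition valid_profile :: "nat \<Rightarrow> (nat \<Rightarrow> nat \<Rightarrow> real) \<Rightarrow> (nat \<Rightarrow> nat \<Rightarrow> nat) \<Rightarrow> bool" where
  "valid_profile n v pos \<longleftrightarrow>
     (\<forall>i<n. bij_betw (pos i) {1..n} {..<n}
          \<and> (\<forall>j<n. v i j \<ge> 0)
          \<and> (\<Sum>j<n. v i j) = 1
          \<and> (\<forall>l l'. 1 \<le> l \<and> l < l' \<and> l' \<le> n \<longrightarrow> v i (pos i l') \<le> v i (pos i l)))"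

definition is_matching :: "nat \<Rightarrow> (nat \<Rightarrow> nat) \<Rightarrow> bool" where
  "is_matching n y \<longleftrightarrow> bij_betw y {..<n} {..<n}"

definition welfare :: "nat \<Rightarrow> (nat \<Rightarrow> nat \<Rightarrow> real) \<Rightarrow> (nat \<Rightarrow> nat) \<Rightarrow> real" where
  "welfare n w y = (\<Sum>i<n. w i (y i))"

definition maximizes :: "nat \<Rightarrow> (nat \<Rightarrow> nat \<Rightarrow> real) \<Rightarrow> (nat \<Rightarrow> nat) \<Rightarrow> bool" where
  "maximizes n w y \<longleftrightarrow> is_matching n y \<and> (\<forall>x. is_matching n x \<longrightarrow> welfare n w x \<le> welfare n w y)"

text \<open>Threshold n^(1/3)/sqrt(log n) on the size of partial matchings in Case 1 (m = n^(1/3)).\<close>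
definition fpa_k :: "nat \<Rightarrow> nat \<Rightarrow> real" where
  "fpa_k n m = real m / sqrt (log 2 (real n))"

definition fpa_pm :: "nat \<Rightarrow> nat \<Rightarrow> (nat \<Rightarrow> nat \<Rightarrow> nat) \<Rightarrow> nat \<Rightarrow> nat set \<Rightarrow> nat set \<Rightarrow> (nat \<Rightarrow> nat) \<Rightarrow> bool" where
  "fpa_pm n m pos l A S y \<longleftrightarrow>
     S \<subseteq> A \<and> inj_on y S \<and> (\<forall>i\<in>S. \<exists>p\<in>{1..l}. y i = pos i p) \<and> real (card S) \<ge> fpa_k n m"

text \<open>One step of Case 1. State: (current position l, active agents, queried pairs).\<close>
inductive fpa1_step :: "nat \<Rightarrow> nat \<Rightarrow> (nat \<Rightarrow> nat \<Rightarrow> nat)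
    \<Rightarrow> nat \<times> nat set \<times> (nat \<times> nat) set \<Rightarrow> nat \<times> nat set \<times> (nat \<times> nat) set \<Rightarrow> bool"
  for n m pos where
  match: "l \<le> n \<Longrightarrow> fpa_pm n m pos l A S y \<Longrightarrow>
     fpa1_step n m pos (l, A, R) (l, A - S, R \<union> (\<lambda>i. (i, y i)) ` S)"
| advance: "l \<le> n \<Longrightarrow> \<not> (\<exists>S y. fpa_pm n m pos l A S y) \<Longrightarrow>
     fpa1_step n m pos (l, A, R) (Suc l, A, R)"

definition fpa2_tilde_pos :: "nat \<Rightarrow> nat \<Rightarrow> (nat \<Rightarrow> nat \<Rightarrow> real) \<Rightarrow> (nat \<Rightarrow> nat \<Rightarrow> nat) \<Rightarrow> nat \<Rightarrow> nat \<Rightarrow> real" where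
  "fpa2_tilde_pos n m v pos i p =
     (let vstar = v i (pos i 1); u = v i (pos i (m + 1)) in
      if p = 1 then vstar
      else if u < 1 / (2 * real n) \<and> 2 \<le> p \<and> p \<le> m div 4 then 1 / (3 * real m)
      else if 2 \<le> p \<and> p \<le> m + 1 then u
      else 0)"

definition fpa2_tilde :: "nat \<Rightarrow> nat \<Rightarrow> (nat \<Rightarrow> nat \<Rightarrow> real) \<Rightarrow> (nat \<Rightarrow> nat \<Rightarrow> nat) \<Rightarrow> nat \<Rightarrow> nat \<Rightarrow> real" where
  "fpa2_tilde n m v pos i j = fpa2_tilde_pos n m v pos i (inv_into {1..n} (pos i) j)"

text \<open>FPA_run n m pos v Q y: some execution of FPA (with m = n^(1/3)) on the profile
  (v, pos) queries exactly the items Q i for agent i and outputs the matching y.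
  All tie-breaking choices are covered by quantifying over all executions.\<close>
definition FPA_run :: "nat \<Rightarrow> nat \<Rightarrow> (nat \<Rightarrow> nat \<Rightarrow> nat) \<Rightarrow> (nat \<Rightarrow> nat \<Rightarrow> real)
    \<Rightarrow> (nat \<Rightarrow> nat set) \<Rightarrow> (nat \<Rightarrow> nat) \<Rightarrow> bool" where
  "FPA_run n m pos v Q y \<longleftrightarrow>
    (if (\<exists>i<n. v i (pos i 1) \<ge> 1 / real m) then
       (\<exists>A R. (fpa1_step n m pos)\<^sup>*\<^sup>* (1, {..<n}, {(i, pos i 1) | i. i < n}) (Suc n, A, R)
           \<and> Q = (\<lambda>i. {j. (i, j) \<in> R})
           \<and> maximizes n (\<lambda>i j. if j \<in> Q i then v i j else 0) y)
     else
       Q = (\<lambda>i. {pos i 1, pos i (m + 1)})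
       \<and> maximizes n (fpa2_tilde n m v pos) y)"

end

theory Submission
  imports Defs
begin

lemma vp_bij: "valid_profile n v pos \<Longrightarrow> i < n \<Longrightarrow> bij_betw (pos i) {1..n} {..<n}"
  unfolding valid_profile_def by blast
lemma vp_nonneg: "valid_profile n v pos \<Longrightarrow> i < n \<Longrightarrow> j < n \<Longrightarrow> v i j \<ge> 0"
  unfolding valid_profile_def by blast
lemma vp_sum: "valid_profile n v pos \<Longrightarrow> i < n \<Longrightarrow> (\<Sum>j<n. v i j) = 1"
  unfolding valid_profile_def by blast
lemma vp_mono: "valid_profile n v pos \<Longrightarrow> i < n \<Longrightarrow> 1 \<le> l \<Longrightarrow> l \<le> l' \<Longrightarrow> l' \<le> n
   \<Longrightarrow> v i (pos i l') \<le> v i (pos i l)"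
  unfolding valid_profile_def by (cases "l = l'") auto

lemma pos_lt: "valid_profile n v pos \<Longrightarrow> i < n \<Longrightarrow> 1 \<le> p \<Longrightarrow> p \<le> n \<Longrightarrow> pos i p < n"
  using vp_bij[of n v pos i] unfolding bij_betw_def by auto

lemma inv_pos: "valid_profile n v pos \<Longrightarrow> i < n \<Longrightarrow> 1 \<le> p \<Longrightarrow> p \<le> n
   \<Longrightarrow> inv_into {1..n} (pos i) (pos i p) = p"
  using vp_bij[of n v pos i] unfolding bij_betw_def by (auto intro: inv_into_f_f)

lemma pos_inv: "valid_profile n v pos \<Longrightarrow> i < n \<Longrightarrow> j < n
   \<Longrightarrow> pos i (inv_into {1..n} (pos i) j) = j \<and> inv_into {1..n} (pos i) j \<in> {1..n}"
  using vp_bij[of n v pos i] unfolding bij_betw_def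
  by (metis f_inv_into_f inv_into_into lessThan_iff)

lemma sum_pos: "valid_profile n v pos \<Longrightarrow> i < n \<Longrightarrow> (\<Sum>p\<in>{1..n}. v i (pos i p)) = 1"
  using sum.reindex_bij_betw[OF vp_bij[of n v pos i], of "v i"] vp_sum[of n v pos i] by simp

lemma pos_nonneg: "valid_profile n v pos \<Longrightarrow> i < n \<Longrightarrow> 1 \<le> p \<Longrightarrow> p \<le> n \<Longrightarrow> v i (pos i p) \<ge> 0"
  using pos_lt vp_nonneg by blast

lemma v_le_inv:
  assumes vp: "valid_profile n v pos" and i: "i < n" and p: "1 \<le> p" "p \<le> n"
  shows "v i (pos i p) \<le> 1 / real p"
proof -
  have "real p * v i (pos i p) = (\<Sum>q\<in>{1..p}. v i (pos i p))" by simp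
  also have "\<dots> \<le> (\<Sum>q\<in>{1..p}. v i (pos i q))"
    by (rule sum_mono) (use vp_mono[OF vp i] p in auto)
  also have "\<dots> \<le> (\<Sum>q\<in>{1..n}. v i (pos i q))"
    by (rule sum_mono2) (use p pos_nonneg[OF vp i] in auto)
  also have "\<dots> = 1" using sum_pos[OF vp i] .
  finally show ?thesis using p by (simp add: field_simps)
qed

lemma extend_matching:
  fixes n :: nat
  assumes S: "S \<subseteq> {..<n}" and inj: "inj_on z S" and zS: "z ` S \<subseteq> {..<n}"
  shows "\<exists>x. bij_betw x {..<n} {..<n} \<and> (\<forall>i\<in>S. x i = z i)"
proof -
  have fS: "finite S" using S by (rule finite_subset) simp
  have "card ({..<n} - S) = card ({..<n} - z ` S)"
    using S zS inj fS by (simp add: card_Diff_subset card_image)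
  then obtain h where h: "bij_betw h ({..<n} - S) ({..<n} - z ` S)"
    using finite_same_card_bij by blast
  define x where "x i = (if i \<in> S then z i else h i)" for i
  have b1: "bij_betw x S (z ` S)"
    using inj unfolding bij_betw_def inj_on_def x_def by auto
  have b2: "bij_betw x ({..<n} - S) ({..<n} - z ` S)"
    using h bij_betw_cong[of "{..<n} - S" x h] unfolding x_def by auto
  have "bij_betw x (S \<union> ({..<n} - S)) (z ` S \<union> ({..<n} - z ` S))"
    by (rule bij_betw_combine[OF b1 b2]) auto
  moreover have "S \<union> ({..<n} - S) = {..<n}" "z ` S \<union> ({..<n} - z ` S) = {..<n}" using S zS by auto
  ultimately show ?thesis unfolding x_def by auto
qed

lemma partial_le_max:
  assumes mx: "maximizes n w y" and w: "\<And>i j. i < n \<Longrightarrow> j < n \<Longrightarrow> w i j \<ge> 0"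
    and S: "S \<subseteq> {..<n}" and inj: "inj_on z S" and zS: "z ` S \<subseteq> {..<n}"
  shows "(\<Sum>i\<in>S. w i (z i)) \<le> welfare n w y"
proof -
  obtain x where x: "bij_betw x {..<n} {..<n}" "\<forall>i\<in>S. x i = z i"
    using extend_matching[OF S inj zS] by blast
  have "(\<Sum>i\<in>S. w i (z i)) = (\<Sum>i\<in>S. w i (x i))" using x(2) by simp
  also have "\<dots> \<le> (\<Sum>i<n. w i (x i))"
    by (rule sum_mono2) (use S x(1) w in \<open>auto simp: bij_betw_def intro!: w\<close>)
  also have "\<dots> \<le> welfare n w y"
    using mx x(1) unfolding maximizes_def is_matching_def welfare_def by blast
  finally show ?thesis .
qed

definition hsum :: "nat \<Rightarrow> real" where "hsum l = (\<Sum>q\<in>{1..<l}. 1 / real q)"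

lemma hsum_Suc: "1 \<le> l \<Longrightarrow> hsum (Suc l) = hsum l + 1 / real l"
  unfolding hsum_def by (simp add: atLeastLessThanSuc add.commute)

lemma hsum_bound: "1 \<le> N \<Longrightarrow> hsum (Suc N) \<le> 1 + ln (real N)"
proof (induction N rule: dec_induct)
  case base
  then show ?case by (simp add: hsum_def)
next
  case (step N)
  have "ln (real N / real (Suc N)) \<le> real N / real (Suc N) - 1"
    using step(1) by (intro ln_le_minus_one) auto
  also have "\<dots> = - 1 / real (Suc N)" by (simp add: field_simps)
  finally have "ln (real N) - ln (real (Suc N)) \<le> - 1 / real (Suc N)"
    using step(1) by (simp add: ln_div)
  then show ?case using step(3) hsum_Suc[of "Suc N"] by simp
qed

lemma step_mono: "fpa1_step n m pos s t \<Longrightarrow> snd (snd s) \<subseteq> snd (snd t)"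
  by (induction rule: fpa1_step.induct) auto

lemma run_mono: "(fpa1_step n m pos)\<^sup>*\<^sup>* s t \<Longrightarrow> snd (snd s) \<subseteq> snd (snd t)"
  by (induction rule: rtranclp_induct) (auto dest: step_mono)

definition Inv2 :: "nat \<Rightarrow> (nat \<Rightarrow> nat \<Rightarrow> nat) \<Rightarrow> nat \<times> nat set \<times> (nat \<times> nat) set \<Rightarrow> bool" where
  "Inv2 n pos s \<longleftrightarrow> (case s of (l, A, R) \<Rightarrow>
     A \<subseteq> {..<n} \<and> R \<subseteq> {..<n} \<times> {..<n} \<and> (\<forall>i\<in>A. {j. (i,j) \<in> R} \<subseteq> {pos i 1})
     \<and> (\<forall>i. card {j. (i,j) \<in> R} \<le> 2))"

lemma card_slice_le: "R \<subseteq> {..<(n::nat)} \<times> {..<n} \<Longrightarrow> finite {j. (i,j) \<in> R}"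
proof -
  assume "R \<subseteq> {..<n} \<times> {..<n}"
  then have "{j. (i,j) \<in> R} \<subseteq> {..<n}" by auto
  then show ?thesis by (rule finite_subset) simp
qed

lemma Inv2_init: "valid_profile n v pos \<Longrightarrow> Inv2 n pos (1, {..<n}, {(i, pos i 1) | i. i < n})"
proof -
  assume vp: "valid_profile n v pos"
  have sl: "{j. (i,j) \<in> {(i, pos i 1) | i. i < n}} = (if i < n then {pos i 1} else {})" for i
    by auto
  have "card {j. (i,j) \<in> {(i, pos i 1) | i. i < n}} \<le> 2" for i
    unfolding sl by simp
  then show ?thesis unfolding Inv2_def using pos_lt[OF vp] by (auto simp: sl)
qed

lemma Inv2_step:
  assumes vp: "valid_profile n v pos" and st: "fpa1_step n m pos s t" and I: "Inv2 n pos s"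
  shows "Inv2 n pos t"
  using st I
proof (induction rule: fpa1_step.induct)
  case (match l A S y R)
  have SA: "S \<subseteq> A" and yS: "\<forall>i\<in>S. \<exists>p\<in>{1..l}. y i = pos i p"
    using match(2) unfolding fpa_pm_def by auto
  have A: "A \<subseteq> {..<n}" and R: "R \<subseteq> {..<n} \<times> {..<n}"
    and RA: "\<forall>i\<in>A. {j. (i,j) \<in> R} \<subseteq> {pos i 1}" and c: "\<forall>i. card {j. (i,j) \<in> R} \<le> 2"
    using match(3) unfolding Inv2_def by auto
  have ylt: "y i < n" if "i \<in> S" for i
    using yS that SA A match(1) pos_lt[OF vp] by fastforce
  let ?R' = "R \<union> (\<lambda>i. (i, y i)) ` S"
  have R': "?R' \<subseteq> {..<n} \<times> {..<n}" using R ylt SA A by auto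
  have sl: "{j. (i,j) \<in> ?R'} = {j. (i,j) \<in> R} \<union> (if i \<in> S then {y i} else {})" for i
    by auto
  have "card {j. (i,j) \<in> ?R'} \<le> 2" for i
  proof (cases "i \<in> S")
    case True
    then have "{j. (i,j) \<in> ?R'} \<subseteq> {pos i 1, y i}" using RA SA sl by auto
    then have "card {j. (i,j) \<in> ?R'} \<le> card {pos i 1, y i}" by (intro card_mono) auto
    also have "\<dots> \<le> 2" by (simp add: card_insert_if)
    finally show ?thesis .
  next
    case False
    then show ?thesis using sl c by simp
  qed
  then show ?case unfolding Inv2_def using A R' RA sl by auto
next
  case (advance l A R)
  then show ?case unfolding Inv2_def by auto
qed

lemma Inv2_run:
  assumes vp: "valid_profile n v pos" and r: "(fpa1_step n m pos)\<^sup>*\<^sup>* (1, {..<n}, {(i, pos i 1) | i. i < n}) t"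
  shows "Inv2 n pos t"
  using r
proof (induction rule: rtranclp_induct)
  case base
  then show ?case using Inv2_init[OF vp] by simp
next
  case (step y z)
  then show ?case using Inv2_step[OF vp] by blast
qed

definition Inv1 :: "nat \<Rightarrow> nat \<Rightarrow> (nat \<Rightarrow> nat \<Rightarrow> nat) \<Rightarrow> (nat \<Rightarrow> nat \<Rightarrow> real) \<Rightarrow> (nat \<Rightarrow> nat) \<Rightarrow> real
     \<Rightarrow> nat \<times> nat set \<times> (nat \<times> nat) set \<Rightarrow> bool" where
  "Inv1 n m pos v x W s \<longleftrightarrow> (case s of (l, A, R) \<Rightarrow>
     1 \<le> l \<and> l \<le> Suc n \<and> A \<subseteq> {..<n} \<and>
     (\<exists>G E (b::nat). G \<subseteq> {..<n} \<and> E \<subseteq> {..<n} \<and>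
        (\<forall>i<n. (i \<in> A \<and> l \<le> inv_into {1..n} (pos i) (x i)) \<or> i \<in> G \<or> i \<in> E) \<and>
        (\<Sum>i\<in>G. v i (x i)) \<le> real b * W \<and>
        real b * fpa_k n m \<le> real (card ({..<n} - A)) \<and>
        (\<Sum>i\<in>E. v i (x i)) \<le> fpa_k n m * hsum l))"

lemma sum_Un_le_nonneg:
  fixes f :: "nat \<Rightarrow> real"
  assumes "finite A" "finite B" "\<And>i. i \<in> A \<union> B \<Longrightarrow> f i \<ge> 0"
  shows "(\<Sum>i\<in>A \<union> B. f i) \<le> (\<Sum>i\<in>A. f i) + (\<Sum>i\<in>B. f i)"
proof -
  have "(\<Sum>i\<in>A \<union> B. f i) = (\<Sum>i\<in>A. f i) + (\<Sum>i\<in>B. f i) - (\<Sum>i\<in>A \<inter> B. f i)"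
    using sum_Un[OF assms(1,2)] by simp
  moreover have "(\<Sum>i\<in>A \<inter> B. f i) \<ge> 0" using assms(3) by (intro sum_nonneg) auto
  ultimately show ?thesis by simp
qed

lemma Inv1_init:
  assumes vp: "valid_profile n v pos" and x: "bij_betw x {..<n} {..<n}"
  shows "Inv1 n m pos v x W (1, {..<n}, {(i, pos i 1) | i. i < n})"
proof -
  have c: "\<forall>i<n. 1 \<le> inv_into {1..n} (pos i) (x i)"
  proof (intro allI impI)
    fix i assume i: "i < n"
    have "x i < n" using x i unfolding bij_betw_def by auto
    then show "1 \<le> inv_into {1..n} (pos i) (x i)" using pos_inv[OF vp i] by auto
  qed
  have main: "\<exists>G E (b::nat). G \<subseteq> {..<n} \<and> E \<subseteq> {..<n} \<and>
        (\<forall>i<n. (i \<in> {..<n} \<and> 1 \<le> inv_into {1..n} (pos i) (x i)) \<or> i \<in> G \<or> i \<in> E) \<and>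
        (\<Sum>i\<in>G. v i (x i)) \<le> real b * W \<and>
        real b * fpa_k n m \<le> real (card ({..<n} - {..<n})) \<and>
        (\<Sum>i\<in>E. v i (x i)) \<le> fpa_k n m * hsum 1"
    apply (rule exI[of _ "{}"], rule exI[of _ "{}"], rule exI[of _ 0])
    using c by (simp add: hsum_def)
  show ?thesis unfolding Inv1_def prod.case
    apply (intro conjI)
       apply simp
      apply simp
     apply simp
    apply (rule main)
    done
qed

lemma Inv1_step:
  assumes vp: "valid_profile n v pos" and x: "bij_betw x {..<n} {..<n}"
    and F: "\<And>S z. S \<subseteq> {..<n} \<Longrightarrow> inj_on z S \<Longrightarrow> (\<forall>i\<in>S. (i, z i) \<in> Rf) \<Longrightarrow> (\<Sum>i\<in>S. v i (z i)) \<le> W"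
    and st: "fpa1_step n m pos s t" and tR: "snd (snd t) \<subseteq> Rf" and I: "Inv1 n m pos v x W s"
  shows "Inv1 n m pos v x W t"
  using st tR I
proof (induction rule: fpa1_step.induct)
  case (match l A S y R)
  let ?pp = "\<lambda>i. inv_into {1..n} (pos i) (x i)"
  let ?k = "fpa_k n m"
  have SA: "S \<subseteq> A" and yinj: "inj_on y S" and yS: "\<forall>i\<in>S. \<exists>p\<in>{1..l}. y i = pos i p"
    and cS: "real (card S) \<ge> ?k"
    using match(2) unfolding fpa_pm_def by auto
  from match(4) have l1: "1 \<le> l" "l \<le> Suc n" and A: "A \<subseteq> {..<n}" unfolding Inv1_def by auto
  from match(4) obtain G E b where G: "G \<subseteq> {..<n}" and E: "E \<subseteq> {..<n}"
    and cov: "\<forall>i<n. (i \<in> A \<and> l \<le> ?pp i) \<or> i \<in> G \<or> i \<in> E"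
    and sG: "(\<Sum>i\<in>G. v i (x i)) \<le> real b * W"
    and cb: "real b * ?k \<le> real (card ({..<n} - A))"
    and sE: "(\<Sum>i\<in>E. v i (x i)) \<le> ?k * hsum l"
    unfolding Inv1_def by auto
  define S' where "S' = {i \<in> S. l \<le> ?pp i}"
  have S'S: "S' \<subseteq> S" unfolding S'_def by auto
  have Sn: "S \<subseteq> {..<n}" using SA A by auto
  have fin: "finite S" "finite S'" "finite G"
    using finite_subset[OF Sn] finite_subset[OF S'S] finite_subset[OF G] by auto
  have xn: "i < n \<Longrightarrow> x i < n" for i using x unfolding bij_betw_def by auto
  have vx_nonneg: "i < n \<Longrightarrow> v i (x i) \<ge> 0" for i using vp_nonneg[OF vp] xn by blast
  have vle: "v i (x i) \<le> v i (y i)" if "i \<in> S'" for i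
  proof -
    have i: "i < n" "i \<in> S" "l \<le> ?pp i" using that Sn S'S unfolding S'_def by auto
    obtain p where p: "p \<in> {1..l}" "y i = pos i p" using yS i(2) by blast
    have pp: "pos i (?pp i) = x i" "?pp i \<in> {1..n}" using pos_inv[OF vp i(1) xn[OF i(1)]] by auto
    have "v i (pos i (?pp i)) \<le> v i (pos i p)"
      by (rule vp_mono[OF vp i(1)]) (use p pp i(3) in auto)
    then show ?thesis using pp p by simp
  qed
  have "(\<Sum>i\<in>S'. v i (y i)) \<le> W"
  proof (rule F)
    show "S' \<subseteq> {..<n}" using S'S Sn by auto
    show "inj_on y S'" using yinj S'S by (rule inj_on_subset)
    show "\<forall>i\<in>S'. (i, y i) \<in> Rf" using match(3) S'S by (auto simp: image_subset_iff)
  qed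
  then have sS': "(\<Sum>i\<in>S'. v i (x i)) \<le> W"
    using sum_mono[of S' "\<lambda>i. v i (x i)" "\<lambda>i. v i (y i)"] vle by simp
  have "(\<Sum>i\<in>G \<union> S'. v i (x i)) \<le> (\<Sum>i\<in>G. v i (x i)) + (\<Sum>i\<in>S'. v i (x i))"
    by (rule sum_Un_le_nonneg) (use fin G S'S Sn vx_nonneg in auto)
  also have "\<dots> \<le> real (Suc b) * W" using sG sS' by (simp add: algebra_simps)
  finally have sG': "(\<Sum>i\<in>G \<union> S'. v i (x i)) \<le> real (Suc b) * W" .
  have "{..<n} - (A - S) = ({..<n} - A) \<union> S" using SA A by auto
  moreover have "card (({..<n} - A) \<union> S) = card ({..<n} - A) + card S"
    by (rule card_Un_disjoint) (use fin SA in auto)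
  ultimately have "real (card ({..<n} - (A - S))) = real (card ({..<n} - A)) + real (card S)" by simp
  then have cb': "real (Suc b) * ?k \<le> real (card ({..<n} - (A - S)))"
    using cb cS by (simp add: algebra_simps)
  have cov': "\<forall>i<n. (i \<in> A - S \<and> l \<le> ?pp i) \<or> i \<in> G \<union> S' \<or> i \<in> E"
    using cov unfolding S'_def by auto
  have main: "\<exists>G E (b::nat). G \<subseteq> {..<n} \<and> E \<subseteq> {..<n} \<and>
        (\<forall>i<n. (i \<in> A - S \<and> l \<le> ?pp i) \<or> i \<in> G \<or> i \<in> E) \<and>
        (\<Sum>i\<in>G. v i (x i)) \<le> real b * W \<and>
        real b * ?k \<le> real (card ({..<n} - (A - S))) \<and>
        (\<Sum>i\<in>E. v i (x i)) \<le> ?k * hsum l"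
    apply (rule exI[of _ "G \<union> S'"], rule exI[of _ E], rule exI[of _ "Suc b"], intro conjI)
         apply (use G S'S Sn in blast)
        apply (rule E)
       apply (rule cov')
      apply (rule sG')
     apply (rule cb')
    apply (rule sE)
    done
  show ?case unfolding Inv1_def prod.case
    apply (intro conjI)
       apply (use l1 in simp)
      apply (use l1 in simp)
     apply (use A in blast)
    apply (rule main)
    done
next
  case (advance l A R)
  let ?pp = "\<lambda>i. inv_into {1..n} (pos i) (x i)"
  let ?k = "fpa_k n m"
  from advance(4) have l1: "1 \<le> l" "l \<le> Suc n" and A: "A \<subseteq> {..<n}" unfolding Inv1_def by auto
  from advance(4) obtain G E b where G: "G \<subseteq> {..<n}" and E: "E \<subseteq> {..<n}"
    and cov: "\<forall>i<n. (i \<in> A \<and> l \<le> ?pp i) \<or> i \<in> G \<or> i \<in> E"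
    and sG: "(\<Sum>i\<in>G. v i (x i)) \<le> real b * W"
    and cb: "real b * ?k \<le> real (card ({..<n} - A))"
    and sE: "(\<Sum>i\<in>E. v i (x i)) \<le> ?k * hsum l"
    unfolding Inv1_def by auto
  define B where "B = {i \<in> A. ?pp i = l}"
  have BA: "B \<subseteq> A" unfolding B_def by auto
  have Bn: "B \<subseteq> {..<n}" using BA A by auto
  have fin: "finite B" "finite E" using finite_subset[OF Bn] finite_subset[OF E] by auto
  have xn: "i < n \<Longrightarrow> x i < n" for i using x unfolding bij_betw_def by auto
  have vx_nonneg: "i < n \<Longrightarrow> v i (x i) \<ge> 0" for i using vp_nonneg[OF vp] xn by blast
  have cB: "real (card B) < ?k"
  proof (rule ccontr)
    assume "\<not> real (card B) < ?k"
    then have "fpa_pm n m pos l A B x"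
      unfolding fpa_pm_def
    proof (intro conjI)
      show "inj_on x B" using x Bn unfolding bij_betw_def by (auto intro: inj_on_subset)
      show "\<forall>i\<in>B. \<exists>p\<in>{1..l}. x i = pos i p"
      proof
        fix i assume i: "i \<in> B"
        then have "i < n" "?pp i = l" using Bn unfolding B_def by auto
        then show "\<exists>p\<in>{1..l}. x i = pos i p" using pos_inv[OF vp \<open>i < n\<close> xn[OF \<open>i < n\<close>]] l1
          by (intro bexI[of _ l]) auto
      qed
    qed (use BA in auto)
    then show False using advance(2) by blast
  qed
  have "(\<Sum>i\<in>B. v i (x i)) \<le> (\<Sum>i\<in>B. 1 / real l)"
  proof (rule sum_mono)
    fix i assume i: "i \<in> B"
    then have "i < n" "?pp i = l" using Bn unfolding B_def by auto
    moreover have "pos i (?pp i) = x i" "?pp i \<in> {1..n}" using pos_inv[OF vp \<open>i < n\<close> xn[OF \<open>i < n\<close>]] by auto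
    ultimately show "v i (x i) \<le> 1 / real l" using v_le_inv[OF vp \<open>i < n\<close>, of l] by auto
  qed
  also have "\<dots> = real (card B) / real l" by simp
  also have "\<dots> \<le> ?k / real l" using cB l1 by (intro divide_right_mono) auto
  finally have sB: "(\<Sum>i\<in>B. v i (x i)) \<le> ?k / real l" .
  have "(\<Sum>i\<in>E \<union> B. v i (x i)) \<le> (\<Sum>i\<in>E. v i (x i)) + (\<Sum>i\<in>B. v i (x i))"
    by (rule sum_Un_le_nonneg) (use fin E Bn vx_nonneg in auto)
  also have "\<dots> \<le> ?k * hsum l + ?k / real l" using sE sB by simp
  also have "\<dots> = ?k * hsum (Suc l)" using hsum_Suc[OF l1(1)] by (simp add: algebra_simps)
  finally have sE': "(\<Sum>i\<in>E \<union> B. v i (x i)) \<le> ?k * hsum (Suc l)" .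
  have cov': "\<forall>i<n. (i \<in> A \<and> Suc l \<le> ?pp i) \<or> i \<in> G \<or> i \<in> E \<union> B"
    using cov unfolding B_def by fastforce
  have main: "\<exists>G E (b::nat). G \<subseteq> {..<n} \<and> E \<subseteq> {..<n} \<and>
        (\<forall>i<n. (i \<in> A \<and> Suc l \<le> ?pp i) \<or> i \<in> G \<or> i \<in> E) \<and>
        (\<Sum>i\<in>G. v i (x i)) \<le> real b * W \<and>
        real b * ?k \<le> real (card ({..<n} - A)) \<and>
        (\<Sum>i\<in>E. v i (x i)) \<le> ?k * hsum (Suc l)"
    apply (rule exI[of _ G], rule exI[of _ "E \<union> B"], rule exI[of _ b], intro conjI)
         apply (rule G)
        apply (use E Bn in blast)
       apply (rule cov')
      apply (rule sG)
     apply (rule cb)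
    apply (rule sE')
    done
  have "Suc l \<le> Suc n" using advance(1) by simp
  then show ?case unfolding Inv1_def prod.case
    apply (intro conjI)
       apply simp
      apply simp
     apply (rule A)
    apply (rule main)
    done
qed

lemma welfare_le_rev:
  assumes vp: "valid_profile n v pos" and y: "is_matching n y"
  shows "welfare n (\<lambda>i j. if j \<in> Q i then v i j else 0) y \<le> welfare n v y"
  unfolding welfare_def
proof (rule sum_mono)
  fix i assume "i \<in> {..<n}"
  then have "i < n" "y i < n" using y unfolding is_matching_def bij_betw_def by auto
  then show "(if y i \<in> Q i then v i (y i) else 0) \<le> v i (y i)" using vp_nonneg[OF vp] by auto
qed

lemma case1_bound:
  assumes vp: "valid_profile n v pos" and x: "bij_betw x {..<n} {..<n}"
    and run: "(fpa1_step n m pos)\<^sup>*\<^sup>* (1, {..<n}, {(i, pos i 1) | i. i < n}) (Suc n, A, R)"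
    and mx: "maximizes n (\<lambda>i j. if j \<in> {j. (i,j) \<in> R} then v i j else 0) y"
    and kpos: "fpa_k n m > 0"
  shows "(\<Sum>i<n. v i (x i)) \<le> real n / fpa_k n m * welfare n v y + fpa_k n m * hsum (Suc n)"
    and "\<forall>S z. S \<subseteq> {..<n} \<and> inj_on z S \<and> (\<forall>i\<in>S. (i, z i) \<in> R) \<longrightarrow> (\<Sum>i\<in>S. v i (z i)) \<le> welfare n v y"
proof -
  let ?W = "welfare n v y"
  let ?w = "\<lambda>i j. if j \<in> {j. (i,j) \<in> R} then v i j else 0"
  have I2: "Inv2 n pos (Suc n, A, R)" using Inv2_run[OF vp run] .
  then have Rn: "R \<subseteq> {..<n} \<times> {..<n}" unfolding Inv2_def by auto
  have F: "(\<Sum>i\<in>S. v i (z i)) \<le> ?W" if S: "S \<subseteq> {..<n}" "inj_on z S" "\<forall>i\<in>S. (i, z i) \<in> R" for S z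
  proof -
    have zS: "z ` S \<subseteq> {..<n}" using S(3) Rn by auto
    have "(\<Sum>i\<in>S. v i (z i)) = (\<Sum>i\<in>S. ?w i (z i))" using S(3) by simp
    also have "\<dots> \<le> welfare n ?w y"
      by (rule partial_le_max[OF mx _ S(1,2) zS]) (use vp_nonneg[OF vp] in auto)
    also have "\<dots> \<le> ?W" using welfare_le_rev[OF vp, of y "\<lambda>i. {j. (i,j) \<in> R}"] mx
      unfolding maximizes_def by simp
    finally show ?thesis .
  qed
  then show "\<forall>S z. S \<subseteq> {..<n} \<and> inj_on z S \<and> (\<forall>i\<in>S. (i, z i) \<in> R) \<longrightarrow> (\<Sum>i\<in>S. v i (z i)) \<le> ?W"
    by blast
  have "snd (snd t) \<subseteq> R \<longrightarrow> Inv1 n m pos v x ?W t"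
    if "(fpa1_step n m pos)\<^sup>*\<^sup>* (1, {..<n}, {(i, pos i 1) | i. i < n}) t" for t
    using that
  proof (induction rule: rtranclp_induct)
    case base
    then show ?case using Inv1_init[OF vp x, of m ?W] by simp
  next
    case (step s t)
    show ?case
    proof
      assume tR: "snd (snd t) \<subseteq> R"
      then have "snd (snd s) \<subseteq> R" using step_mono[OF step(2)] by blast
      then have "Inv1 n m pos v x ?W s" using step(3) by blast
      then show "Inv1 n m pos v x ?W t" using Inv1_step[OF vp x _ step(2) tR] F by blast
    qed
  qed
  from this[OF run] have I1: "Inv1 n m pos v x ?W (Suc n, A, R)" by simp
  let ?pp = "\<lambda>i. inv_into {1..n} (pos i) (x i)"
  let ?k = "fpa_k n m"
  obtain G E b where G: "G \<subseteq> {..<n}" and E: "E \<subseteq> {..<n}"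
    and cov: "\<forall>i<n. (i \<in> A \<and> Suc n \<le> ?pp i) \<or> i \<in> G \<or> i \<in> E"
    and sG: "(\<Sum>i\<in>G. v i (x i)) \<le> real b * ?W"
    and cb: "real b * ?k \<le> real (card ({..<n} - A))"
    and sE: "(\<Sum>i\<in>E. v i (x i)) \<le> ?k * hsum (Suc n)"
    using I1 unfolding Inv1_def by auto
  have xn: "i < n \<Longrightarrow> x i < n" for i using x unfolding bij_betw_def by auto
  have vx_nonneg: "i < n \<Longrightarrow> v i (x i) \<ge> 0" for i using vp_nonneg[OF vp] xn by blast
  have ppn: "i < n \<Longrightarrow> ?pp i \<le> n" for i using pos_inv[OF vp _ xn] by auto
  have cov': "{..<n} \<subseteq> G \<union> E" using cov ppn by fastforce
  have fin: "finite G" "finite E" using finite_subset[OF G] finite_subset[OF E] by auto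
  have "(\<Sum>i<n. v i (x i)) \<le> (\<Sum>i\<in>G \<union> E. v i (x i))"
    by (rule sum_mono2) (use fin cov' G E vx_nonneg in auto)
  also have "\<dots> \<le> (\<Sum>i\<in>G. v i (x i)) + (\<Sum>i\<in>E. v i (x i))"
    by (rule sum_Un_le_nonneg) (use fin G E vx_nonneg in auto)
  finally have tot: "(\<Sum>i<n. v i (x i)) \<le> real b * ?W + ?k * hsum (Suc n)" using sG sE by simp
  have Wnn: "?W \<ge> 0" unfolding welfare_def using mx vp_nonneg[OF vp]
    unfolding maximizes_def is_matching_def bij_betw_def by (auto intro!: sum_nonneg)
  show "(\<Sum>i<n. v i (x i)) \<le> real n / ?k * ?W + ?k * hsum (Suc n)"
  proof -
    have "card ({..<n} - A) \<le> card {..<n}" by (rule card_mono) auto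
    then have "real (card ({..<n} - A)) \<le> real n" by simp
    with cb have "real b \<le> real n / ?k" using kpos by (simp add: field_simps)
    then have "real b * ?W \<le> real n / ?k * ?W" using Wnn by (rule mult_right_mono)
    then show ?thesis using tot by simp
  qed
qed

lemma m_lt_n: "8 \<le> (m::nat) \<Longrightarrow> m + 1 < m ^ 3"
proof -
  assume m8: "8 \<le> m"
  have "8 * 8 \<le> m * m" by (rule mult_le_mono[OF m8 m8])
  then have "m * (8 * 8) \<le> m * (m * m)" by (rule mult_le_mono2)
  moreover have "m + 1 < m * (8 * 8)" using m8 by simp
  moreover have "m ^ 3 = m * (m * m)" by (simp add: power3_eq_cube)
  ultimately show ?thesis by linarith
qed

lemma L_key:
  assumes vp: "valid_profile n v pos" and n: "n = m ^ 3" and m8: "8 \<le> m" and m4: "4 dvd m"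
    and i: "i < n" and sm: "v i (pos i 1) < 1 / real m" and L: "v i (pos i (m + 1)) < 1 / (2 * real n)"
  shows "v i (pos i (m div 4)) \<ge> 1 / (4 * real m)"
proof -
  define q where "q = m div 4"
  have mq: "m = 4 * q" using m4 unfolding q_def by auto
  have q2: "2 \<le> q" using m8 mq by simp
  have mn: "m + 1 < n" using m_lt_n[OF m8] n by simp
  let ?f = "\<lambda>p. v i (pos i p)"
  have s1: "sum ?f {1..n} = sum ?f {1..m+1} + sum ?f {m+2..n}"
    using sum.ub_add_nat[of 1 "m+1" ?f "n - (m+1)"] mn by simp
  have s2: "sum ?f {1..m+1} = sum ?f {1..q} + sum ?f {q+1..m+1}"
    using sum.ub_add_nat[of 1 q ?f "m + 1 - q"] mq by simp
  have b1: "sum ?f {1..q} \<le> real q * (1 / real m)"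
  proof -
    have "sum ?f {1..q} \<le> real (card {1..q}) * (1 / real m)"
    proof (rule sum_bounded_above)
      fix p assume p: "p \<in> {1..q}"
      have "?f p \<le> ?f 1" using vp_mono[OF vp i, of 1 p] p mq mn by auto
      then show "?f p \<le> 1 / real m" using sm by simp
    qed
    then show ?thesis by simp
  qed
  have b2: "sum ?f {q+1..m+1} \<le> real (m + 1 - q) * ?f q"
  proof -
    have "sum ?f {q+1..m+1} \<le> real (card {q+1..m+1}) * ?f q"
    proof (rule sum_bounded_above)
      fix p assume p: "p \<in> {q+1..m+1}"
      show "?f p \<le> ?f q" using vp_mono[OF vp i, of q p] p q2 mn by auto
    qed
    then show ?thesis by simp
  qed
  have b3: "sum ?f {m+2..n} \<le> real n * (1 / (2 * real n))"
  proof -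
    have "sum ?f {m+2..n} \<le> real (card {m+2..n}) * ?f (m+1)"
      by (rule sum_bounded_above) (use vp_mono[OF vp i, of "m+1"] in auto)
    also have "\<dots> \<le> real n * ?f (m+1)"
      by (rule mult_right_mono) (use pos_nonneg[OF vp i, of "m+1"] mn in auto)
    also have "\<dots> \<le> real n * (1 / (2 * real n))"
      using L by (intro mult_left_mono) auto
    finally show ?thesis .
  qed
  have "real n * (1 / (2 * real n)) = 1/2" using mn by simp
  moreover have "real q * (1 / real m) = 1/4" using mq q2 by simp
  ultimately have "1 \<le> 1/4 + real (m + 1 - q) * ?f q + 1/2"
    using s1 s2 b1 b2 b3 sum_pos[OF vp i] by linarith
  then have a1: "1/4 \<le> real (m + 1 - q) * ?f q" by linarith
  have eq: "real (m + 1 - q) = 3 * real q + 1" using mq by simp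
  have a2: "1/4 \<le> (3 * real q + 1) * ?f q" using a1 unfolding eq .
  have f0: "?f q \<ge> 0" using pos_nonneg[OF vp i, of q] q2 mq mn by simp
  have "(3 * real q + 1) * ?f q \<le> (4 * real q) * ?f q"
    by (rule mult_right_mono) (use q2 f0 in auto)
  moreover have "4 * real q * ?f q = real m * ?f q" using mq by simp
  ultimately have "1/4 \<le> real m * ?f q" using a2 by linarith
  then show ?thesis using m8 unfolding q_def by (simp add: field_simps)
qed

definition tw :: "nat \<Rightarrow> nat \<Rightarrow> (nat \<Rightarrow> nat \<Rightarrow> real) \<Rightarrow> (nat \<Rightarrow> nat \<Rightarrow> nat) \<Rightarrow> nat \<Rightarrow> real" where
  "tw n m v pos i = (if v i (pos i (m + 1)) < 1 / (2 * real n) then 1 / (3 * real m) else v i (pos i (m + 1)))"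

lemma tilde_val:
  shows "p = 1 \<Longrightarrow> fpa2_tilde_pos n m v pos i p = v i (pos i 1)"
    and "p \<noteq> 1 \<Longrightarrow> v i (pos i (m + 1)) < 1 / (2 * real n) \<Longrightarrow> 2 \<le> p \<Longrightarrow> p \<le> m div 4
         \<Longrightarrow> fpa2_tilde_pos n m v pos i p = 1 / (3 * real m)"
    and "p \<noteq> 1 \<Longrightarrow> \<not> (v i (pos i (m + 1)) < 1 / (2 * real n) \<and> 2 \<le> p \<and> p \<le> m div 4) \<Longrightarrow> 2 \<le> p
         \<Longrightarrow> p \<le> m + 1 \<Longrightarrow> fpa2_tilde_pos n m v pos i p = v i (pos i (m + 1))"
    and "p \<noteq> 1 \<Longrightarrow> \<not> (2 \<le> p \<and> p \<le> m + 1) \<Longrightarrow> fpa2_tilde_pos n m v pos i p = 0"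
proof -
  show "p = 1 \<Longrightarrow> fpa2_tilde_pos n m v pos i p = v i (pos i 1)"
    unfolding fpa2_tilde_pos_def Let_def by simp
  show "p \<noteq> 1 \<Longrightarrow> v i (pos i (m + 1)) < 1 / (2 * real n) \<Longrightarrow> 2 \<le> p \<Longrightarrow> p \<le> m div 4
         \<Longrightarrow> fpa2_tilde_pos n m v pos i p = 1 / (3 * real m)"
    unfolding fpa2_tilde_pos_def Let_def by simp
  show "p \<noteq> 1 \<Longrightarrow> \<not> (v i (pos i (m + 1)) < 1 / (2 * real n) \<and> 2 \<le> p \<and> p \<le> m div 4) \<Longrightarrow> 2 \<le> p
         \<Longrightarrow> p \<le> m + 1 \<Longrightarrow> fpa2_tilde_pos n m v pos i p = v i (pos i (m + 1))"
    unfolding fpa2_tilde_pos_def Let_def by (simp only: if_False if_True) (simp (no_asm_simp))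
  assume a: "p \<noteq> 1" "\<not> (2 \<le> p \<and> p \<le> m + 1)"
  have "m div 4 \<le> m" by (rule div_le_dividend)
  then have "\<not> (2 \<le> p \<and> p \<le> m div 4)" using a by auto
  then show "fpa2_tilde_pos n m v pos i p = 0"
    unfolding fpa2_tilde_pos_def Let_def using a by auto
qed

lemma tilde_facts:
  assumes vp: "valid_profile n v pos" and n: "n = m ^ 3" and m8: "8 \<le> m" and m4: "4 dvd m"
    and i: "i < n" and sm: "v i (pos i 1) < 1 / real m" and p: "1 \<le> p" "p \<le> n"
  shows "fpa2_tilde_pos n m v pos i p \<ge> 0"
    and "3/4 * fpa2_tilde_pos n m v pos i p \<le> v i (pos i p)"
    and "v i (pos i p) \<le> 2 * real m ^ 2 * fpa2_tilde_pos n m v pos i p + 3 * tw n m v pos i"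
    and "2 \<le> p \<Longrightarrow> p \<le> m div 4 \<Longrightarrow> tw n m v pos i \<le> fpa2_tilde_pos n m v pos i p"
    and "tw n m v pos i \<ge> 0"
proof -
  have mn: "m + 1 < n" using m_lt_n[OF m8] n by simp
  have mpos: "real m > 0" using m8 by simp
  let ?u = "v i (pos i (m + 1))"
  let ?vs = "v i (pos i 1)"
  let ?tp = "fpa2_tilde_pos n m v pos i p"
  let ?L = "?u < 1 / (2 * real n)"
  have u0: "?u \<ge> 0" using pos_nonneg[OF vp i, of "m+1"] mn by simp
  have vs0: "?vs \<ge> 0" using pos_nonneg[OF vp i, of 1] mn by simp
  have vle: "v i (pos i p) \<le> ?vs" using vp_mono[OF vp i, of 1 p] p by simp
  have v0: "v i (pos i p) \<ge> 0" using pos_nonneg[OF vp i] p by simp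
  have q4: "m div 4 \<le> m" by (rule div_le_dividend)
  have T1: "?tp = ?vs" if "p = 1" using tilde_val(1) that by simp
  have T2: "?tp = 1 / (3 * real m)" if "p \<noteq> 1" "?L" "p \<le> m div 4"
  proof -
    have "2 \<le> p" using that(1) p by simp
    then show ?thesis by (intro tilde_val(2)) (use that in auto)
  qed
  have T3: "?tp = ?u" if "p \<noteq> 1" "\<not> (?L \<and> p \<le> m div 4)" "p \<le> m + 1"
  proof -
    have "2 \<le> p" using that(1) p by simp
    then show ?thesis by (intro tilde_val(3)) (use that in auto)
  qed
  have T4: "?tp = 0" if "m + 1 < p" using tilde_val(4)[of p] that by simp
  have Lv: "1 / (4 * real m) \<le> v i (pos i p)" if "?L" "p \<le> m div 4"
  proof -
    have "v i (pos i (m div 4)) \<ge> 1 / (4 * real m)" using L_key[OF vp n m8 m4 i sm that(1)] .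
    moreover have "v i (pos i (m div 4)) \<le> v i (pos i p)"
      using vp_mono[OF vp i, of p "m div 4"] that(2) p q4 mn by simp
    ultimately show ?thesis by simp
  qed
  have um: "?u \<le> v i (pos i p)" if "p \<le> m + 1" using vp_mono[OF vp i, of p "m+1"] that p mn by simp
  have tail: "v i (pos i p) \<le> ?u" if "m + 1 < p" using vp_mono[OF vp i, of "m+1" p] that p by simp
  have m3: "1 / (3 * real m) \<ge> 0" using mpos by simp
  show t0: "?tp \<ge> 0"
  proof (cases "p = 1")
    case True then show ?thesis using T1 vs0 by simp
  next
    case p1: False
    show ?thesis
    proof (cases "?L \<and> p \<le> m div 4")
      case True then show ?thesis using T2[OF p1] m3 by simp
    next
      case nL: False
      show ?thesis
      proof (cases "p \<le> m + 1")
        case True then show ?thesis using T3[OF p1 nL] u0 by simp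
      next
        case False then show ?thesis using T4 by simp
      qed
    qed
  qed
  show tw0: "tw n m v pos i \<ge> 0" unfolding tw_def using u0 mpos by auto
  show "3/4 * ?tp \<le> v i (pos i p)"
  proof (cases "p = 1")
    case True then show ?thesis using T1 vs0 by simp
  next
    case p1: False
    show ?thesis
    proof (cases "?L \<and> p \<le> m div 4")
      case True
      have "3/4 * (1 / (3 * real m)) = 1 / (4 * real m)" by simp
      then show ?thesis using T2[OF p1] True Lv by simp
    next
      case nL: False
      show ?thesis
      proof (cases "p \<le> m + 1")
        case True then show ?thesis using T3[OF p1 nL True] um[OF True] u0 by simp
      next
        case False then show ?thesis using T4 v0 by simp
      qed
    qed
  qed
  have m2: "1 \<le> 2 * real m ^ 2"
  proof -
    have "(1::real) \<le> real m ^ 2" using m8 by (simp add: one_le_power)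
    then show ?thesis by simp
  qed
  have key: "1 / real m \<le> 2 * real m ^ 2 * ?u" if "\<not> ?L"
  proof -
    have "1 / real m = 2 * real m ^ 2 * (1 / (2 * real n))"
      using n mpos by (simp add: power2_eq_square power3_eq_cube field_simps)
    also have "\<dots> \<le> 2 * real m ^ 2 * ?u" using that by (intro mult_left_mono) auto
    finally show ?thesis .
  qed
  show "v i (pos i p) \<le> 2 * real m ^ 2 * ?tp + 3 * tw n m v pos i"
  proof -
    have prodnn: "2 * real m ^ 2 * ?tp \<ge> 0" using t0 by simp
    have twL: "?L \<Longrightarrow> 3 * tw n m v pos i = 1 / real m" unfolding tw_def by simp
    have twH: "\<not> ?L \<Longrightarrow> tw n m v pos i = ?u" unfolding tw_def by simp
    show ?thesis
    proof (cases "p = 1")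
      case True
      then have e: "?tp = v i (pos i p)" using T1 by simp
      have "1 * v i (pos i p) \<le> 2 * real m ^ 2 * v i (pos i p)" by (rule mult_right_mono[OF m2 v0])
      then show ?thesis using e tw0 by simp
    next
      case p1: False
      show ?thesis
      proof (cases ?L)
        case True
        then show ?thesis using twL[OF True] vle sm prodnn by linarith
      next
        case nL: False
        show ?thesis
        proof (cases "p \<le> m + 1")
          case True
          have "?tp = ?u" using T3[OF p1 _ True] nL by simp
          then show ?thesis using key[OF nL] twH[OF nL] vle sm u0 by simp
        next
          case False
          then show ?thesis using tail twH[OF nL] prodnn u0 by simp
        qed
      qed
    qed
  qed
  show "2 \<le> p \<Longrightarrow> p \<le> m div 4 \<Longrightarrow> tw n m v pos i \<le> ?tp"
  proof -
    assume a: "2 \<le> p" "p \<le> m div 4"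
    then have p1: "p \<noteq> 1" "p \<le> m + 1" using q4 by auto
    show ?thesis
    proof (cases ?L)
      case True
      have "?tp = 1 / (3 * real m)" by (intro tilde_val(2)) (use p1 True a in auto)
      then show ?thesis using True unfolding tw_def by simp
    next
      case False
      have "?tp = ?u" by (intro tilde_val(3)) (use p1 False a in auto)
      then show ?thesis using False unfolding tw_def by simp
    qed
  qed
qed

definition gvalid :: "nat set \<Rightarrow> nat set \<Rightarrow> (nat \<Rightarrow> nat set) \<Rightarrow> (nat \<times> nat) set \<Rightarrow> bool" where
  "gvalid I J G M \<longleftrightarrow> M \<subseteq> I \<times> J \<and> (\<forall>p\<in>M. snd p \<in> G (fst p)) \<and> inj_on fst M \<and> inj_on snd M"

lemma greedy:
  fixes t :: "nat \<Rightarrow> real"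
  assumes fI: "finite I" and fJ: "finite J" and GJ: "\<And>i. i \<in> I \<Longrightarrow> G i \<subseteq> J"
    and cg: "\<And>i. i \<in> I \<Longrightarrow> g \<le> card (G i)" and g: "0 < g" and tn: "\<And>i. i \<in> I \<Longrightarrow> t i \<ge> 0"
  shows "\<exists>M. gvalid I J G M \<and> (\<Sum>i\<in>I. t i) \<le> (1 + real (card I) / real g) * (\<Sum>p\<in>M. t (fst p))"
proof -
  define Fam where "Fam = {M. gvalid I J G M}"
  define f :: "(nat \<times> nat) set \<Rightarrow> real" where "f M = (\<Sum>p\<in>M. t (fst p))" for M
  have finF: "finite Fam" unfolding Fam_def gvalid_def
    by (rule finite_subset[of _ "Pow (I \<times> J)"]) (use fI fJ in auto)
  have ne: "{} \<in> Fam" unfolding Fam_def gvalid_def by auto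
  define mu where "mu = Max (f ` Fam)"
  have "mu \<in> f ` Fam" unfolding mu_def using finF ne by (intro Max_in) auto
  then obtain M where MF: "M \<in> Fam" and fM: "f M = mu" by auto
  have mx: "f M' \<le> f M" if "M' \<in> Fam" for M'
    unfolding fM mu_def using finF that by (intro Max_ge) auto
  have vM: "M \<subseteq> I \<times> J" "\<forall>p\<in>M. snd p \<in> G (fst p)" "inj_on fst M" "inj_on snd M"
    using MF unfolding Fam_def gvalid_def by auto
  have finM: "finite M" using finite_subset[OF vM(1)] fI fJ by auto
  have fMnn: "f M \<ge> 0" unfolding f_def using vM(1) tn by (intro sum_nonneg) auto
  have claim: "\<exists>p\<in>M. snd p = j \<and> t i \<le> t (fst p)"
    if i: "i \<in> I" "i \<notin> fst ` M" "t i > 0" and j: "j \<in> G i" for i j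
  proof (rule ccontr)
    assume nc: "\<not> ?thesis"
    have jJ: "j \<in> J" using GJ[OF i(1)] j by auto
    show False
    proof (cases "\<exists>p\<in>M. snd p = j")
      case False
      let ?M' = "insert (i, j) M"
      have "?M' \<in> Fam" unfolding Fam_def gvalid_def using vM i j jJ False
        by (auto simp: inj_on_def image_iff; metis prod.collapse)
      moreover have "f ?M' = f M + t i"
        unfolding f_def using finM i(2) by (subst sum.insert) (auto simp: image_iff)
      ultimately show False using mx i(3) by fastforce
    next
      case True
      then obtain p where p: "p \<in> M" "snd p = j" by blast
      then have tp: "t (fst p) < t i" using nc by auto
      let ?M' = "insert (i, j) (M - {p})"
      have uniq: "q \<in> M \<Longrightarrow> snd q = j \<Longrightarrow> q = p" for q using vM(4) p unfolding inj_on_def by auto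
      have "?M' \<in> Fam" unfolding Fam_def gvalid_def using vM i j jJ uniq
        by (auto simp: inj_on_def image_iff; metis prod.collapse)
      moreover have "f ?M' = f M - t (fst p) + t i"
      proof -
        have "(i, j) \<notin> M - {p}" using i(2) by (auto simp: image_iff; metis fst_conv)
        then have "f ?M' = t i + f (M - {p})" unfolding f_def using finM by (subst sum.insert) auto
        also have "f (M - {p}) = f M - t (fst p)" unfolding f_def using finM p(1) by (simp add: sum_diff1)
        finally show ?thesis by simp
      qed
      ultimately show False using mx tp by fastforce
    qed
  qed
  have unm: "t i \<le> f M / real g" if i: "i \<in> I" "i \<notin> fst ` M" for i
  proof (cases "t i > 0")
    case False
    have "0 \<le> f M / real g" using fMnn by simp
    then show ?thesis using False by linarith
  next
    case True
    define own where "own j = (SOME p. p \<in> M \<and> snd p = j \<and> t i \<le> t (fst p))" for j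
    have own: "own j \<in> M \<and> snd (own j) = j \<and> t i \<le> t (fst (own j))" if "j \<in> G i" for j
    proof -
      have "\<exists>p. p \<in> M \<and> snd p = j \<and> t i \<le> t (fst p)" using claim[OF i True that] by blast
      from someI_ex[OF this] show ?thesis unfolding own_def .
    qed
    have injo: "inj_on own (G i)" using own unfolding inj_on_def by metis
    have finG: "finite (G i)" using finite_subset[OF GJ[OF i(1)] fJ] .
    have "real g * t i \<le> real (card (G i)) * t i"
      using cg[OF i(1)] True by (intro mult_right_mono) auto
    also have "\<dots> = (\<Sum>j\<in>G i. t i)" by simp
    also have "\<dots> \<le> (\<Sum>j\<in>G i. t (fst (own j)))" using own by (intro sum_mono) auto
    also have "\<dots> = (\<Sum>p\<in>own ` G i. t (fst p))" using sum.reindex[OF injo, of "\<lambda>p. t (fst p)"] by simp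
    also have "\<dots> \<le> f M" unfolding f_def
      by (rule sum_mono2) (use finM own vM(1) tn in auto)
    finally show ?thesis using g by (simp add: field_simps)
  qed
  have fstI: "fst ` M \<subseteq> I" using vM(1) by auto
  have "(\<Sum>i\<in>I. t i) = (\<Sum>i\<in>fst ` M. t i) + (\<Sum>i\<in>I - fst ` M. t i)"
    using fI fstI by (metis sum.subset_diff add.commute)
  also have "(\<Sum>i\<in>fst ` M. t i) = f M" unfolding f_def using sum.reindex[OF vM(3), of t] by simp
  also have "(\<Sum>i\<in>I - fst ` M. t i) \<le> (\<Sum>i\<in>I - fst ` M. f M / real g)" using unm by (intro sum_mono) auto
  also have "\<dots> = real (card (I - fst ` M)) * (f M / real g)" by simp
  also have "\<dots> \<le> real (card I) * (f M / real g)"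
    using fMnn g fI by (intro mult_right_mono) (auto intro: card_mono)
  finally have "(\<Sum>i\<in>I. t i) \<le> (1 + real (card I) / real g) * f M" by (simp add: algebra_simps)
  then show ?thesis using MF unfolding Fam_def f_def by blast
qed

lemma case2_bound:
  assumes vp: "valid_profile n v pos" and n: "n = m ^ 3" and m8: "8 \<le> m" and m4: "4 dvd m"
    and small: "\<forall>i<n. v i (pos i 1) < 1 / real m"
    and mx: "maximizes n (fpa2_tilde n m v pos) y" and x: "bij_betw x {..<n} {..<n}"
  shows "(\<Sum>i<n. v i (x i)) \<le> 36 * real m ^ 2 * welfare n v y"
proof -
  let ?tl = "fpa2_tilde n m v pos"
  let ?T = "welfare n ?tl y"
  let ?W = "welfare n v y"
  let ?tw = "tw n m v pos"
  let ?inv = "\<lambda>i j. inv_into {1..n} (pos i) j"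
  have mn: "m + 1 < n" using m_lt_n[OF m8] n by simp
  have tlp: "?tl i j = fpa2_tilde_pos n m v pos i (?inv i j)" for i j
    unfolding fpa2_tilde_def by simp
  have invf: "i < n \<Longrightarrow> j < n \<Longrightarrow> pos i (?inv i j) = j \<and> 1 \<le> ?inv i j \<and> ?inv i j \<le> n" for i j
    using pos_inv[OF vp] by auto
  have tl0: "?tl i j \<ge> 0" if "i < n" "j < n" for i j
    using tilde_facts(1)[OF vp n m8 m4 that(1) small[rule_format, OF that(1)]] invf[OF that] tlp by auto
  have yb: "bij_betw y {..<n} {..<n}" using mx unfolding maximizes_def is_matching_def by auto
  have yn: "i < n \<Longrightarrow> y i < n" for i using yb unfolding bij_betw_def by auto
  have xn: "i < n \<Longrightarrow> x i < n" for i using x unfolding bij_betw_def by auto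
  have A: "3/4 * ?T \<le> ?W"
  proof -
    have "3/4 * ?T = (\<Sum>i<n. 3/4 * ?tl i (y i))" unfolding welfare_def by (simp add: sum_distrib_left)
    also have "\<dots> \<le> (\<Sum>i<n. v i (y i))"
    proof (rule sum_mono)
      fix i assume "i \<in> {..<n}"
      then have i: "i < n" by simp
      have f: "pos i (?inv i (y i)) = y i" "1 \<le> ?inv i (y i)" "?inv i (y i) \<le> n" using invf[OF i yn[OF i]] by auto
      show "3/4 * ?tl i (y i) \<le> v i (y i)"
        using tilde_facts(2)[OF vp n m8 m4 i small[rule_format, OF i] f(2,3)] f(1) tlp by simp
    qed
    finally show ?thesis unfolding welfare_def .
  qed
  have B: "(\<Sum>i<n. v i (x i)) \<le> 2 * real m ^ 2 * ?T + 3 * (\<Sum>i<n. ?tw i)"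
  proof -
    have "(\<Sum>i<n. v i (x i)) \<le> (\<Sum>i<n. 2 * real m ^ 2 * ?tl i (x i) + 3 * ?tw i)"
    proof (rule sum_mono)
      fix i assume "i \<in> {..<n}"
      then have i: "i < n" by simp
      have f: "pos i (?inv i (x i)) = x i" "1 \<le> ?inv i (x i)" "?inv i (x i) \<le> n" using invf[OF i xn[OF i]] by auto
      show "v i (x i) \<le> 2 * real m ^ 2 * ?tl i (x i) + 3 * ?tw i"
        using tilde_facts(3)[OF vp n m8 m4 i small[rule_format, OF i] f(2,3)] f(1) tlp by simp
    qed
    also have "\<dots> = 2 * real m ^ 2 * welfare n ?tl x + 3 * (\<Sum>i<n. ?tw i)"
      unfolding welfare_def by (simp add: sum.distrib sum_distrib_left)
    also have "\<dots> \<le> 2 * real m ^ 2 * ?T + 3 * (\<Sum>i<n. ?tw i)"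
    proof -
      have "welfare n ?tl x \<le> ?T" using mx x unfolding maximizes_def is_matching_def by blast
      then show ?thesis by (simp add: mult_left_mono)
    qed
    finally show ?thesis .
  qed
  define q where "q = m div 4"
  have mq: "m = 4 * q" using m4 unfolding q_def by auto
  have q2: "2 \<le> q" using m8 mq by simp
  define G where "G i = pos i ` {2..q}" for i
  have cardG: "card (G i) = q - 1" if "i < n" for i
  proof -
    have "inj_on (pos i) {2..q}"
      using vp_bij[OF vp that] unfolding bij_betw_def by (rule inj_on_subset[OF conjunct1]) (use mq mn in auto)
    then show ?thesis unfolding G_def by (simp add: card_image)
  qed
  have GJ: "G i \<subseteq> {..<n}" if "i < n" for i
    unfolding G_def using pos_lt[OF vp that] mq mn by auto
  obtain M where M: "gvalid {..<n} {..<n} G M"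
    and gr: "(\<Sum>i<n. ?tw i) \<le> (1 + real (card {..<n::nat}) / real (q - 1)) * (\<Sum>p\<in>M. ?tw (fst p))"
  proof -
    have "\<exists>M. gvalid {..<n} {..<n} G M \<and> (\<Sum>i\<in>{..<n}. ?tw i) \<le> (1 + real (card {..<n::nat}) / real (q - 1)) * (\<Sum>p\<in>M. ?tw (fst p))"
    proof (rule greedy)
      show "\<And>i. i \<in> {..<n} \<Longrightarrow> G i \<subseteq> {..<n}" using GJ by blast
      show "\<And>i. i \<in> {..<n} \<Longrightarrow> q - 1 \<le> card (G i)" using cardG by simp
      show "0 < q - 1" using q2 by simp
      show "\<And>i. i \<in> {..<n} \<Longrightarrow> 0 \<le> ?tw i"
      proof -
        fix i assume "i \<in> {..<n}"
        then have i: "i < n" by simp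
        show "0 \<le> ?tw i" using tilde_facts(5)[OF vp n m8 m4 i small[rule_format, OF i], of 1] mn by simp
      qed
    qed auto
    then show ?thesis using that by blast
  qed
  have vM: "M \<subseteq> {..<n} \<times> {..<n}" "\<forall>p\<in>M. snd p \<in> G (fst p)" "inj_on fst M" "inj_on snd M"
    using M unfolding gvalid_def by auto
  define z where "z i = (SOME j. (i, j) \<in> M)" for i
  have zM: "(i, z i) \<in> M" if "i \<in> fst ` M" for i
    unfolding z_def using that by (auto intro: someI)
  have injz: "inj_on z (fst ` M)"
  proof (rule inj_onI)
    fix a b assume a: "a \<in> fst ` M" and b: "b \<in> fst ` M" and e: "z a = z b"
    have "snd (a, z a) = snd (b, z b)" using e by simp
    then have "(a, z a) = (b, z b)" using vM(4) zM[OF a] zM[OF b] unfolding inj_on_def by blast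
    then show "a = b" by simp
  qed
  have Sn: "fst ` M \<subseteq> {..<n}" using vM(1) by auto
  have zS: "z ` fst ` M \<subseteq> {..<n}" using zM vM(1) by auto
  have "(\<Sum>p\<in>M. ?tw (fst p)) = (\<Sum>i\<in>fst ` M. ?tw i)" using sum.reindex[OF vM(3), of ?tw] by simp
  also have "\<dots> \<le> (\<Sum>i\<in>fst ` M. ?tl i (z i))"
  proof (rule sum_mono)
    fix i assume a: "i \<in> fst ` M"
    then have i: "i < n" using Sn by auto
    have "z i \<in> G i" using vM(2) zM[OF a] by auto
    then obtain p where p: "p \<in> {2..q}" "z i = pos i p" unfolding G_def by auto
    have pn: "1 \<le> p" "p \<le> n" using p mq mn by auto
    have "?inv i (z i) = p" using inv_pos[OF vp i pn] p by simp
    then show "?tw i \<le> ?tl i (z i)"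
      using tilde_facts(4)[OF vp n m8 m4 i small[rule_format, OF i] pn] p tlp unfolding q_def by simp
  qed
  also have "\<dots> \<le> ?T" by (rule partial_le_max[OF mx _ Sn injz zS]) (use tl0 in auto)
  finally have MT: "(\<Sum>p\<in>M. ?tw (fst p)) \<le> ?T" .
  have "(1 + real n / real (q - 1)) \<ge> 0" by simp
  then have "(1 + real n / real (q - 1)) * (\<Sum>p\<in>M. ?tw (fst p)) \<le> (1 + real n / real (q - 1)) * ?T"
    using MT by (intro mult_left_mono)
  then have C: "(\<Sum>i<n. ?tw i) \<le> (1 + real n / real (q - 1)) * ?T"
    using gr by simp
  have "real n / real (q - 1) \<le> 8 * real m ^ 2"
  proof -
    have "real q \<le> 2 * real (q - 1)" using q2 by simp
    then have "real m ^ 2 * (4 * real q) \<le> real m ^ 2 * (8 * real (q - 1))"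
      by (intro mult_left_mono) auto
    moreover have "real n = real m ^ 2 * (4 * real q)"
      using n mq by (simp add: power2_eq_square power3_eq_cube)
    ultimately have "real n \<le> 8 * real m ^ 2 * real (q - 1)" by simp
    then show ?thesis using q2 by (simp add: field_simps)
  qed
  have T0: "?T \<ge> 0" unfolding welfare_def using tl0 yn by (intro sum_nonneg) auto
  have "(\<Sum>i<n. ?tw i) \<le> (1 + 8 * real m ^ 2) * ?T"
  proof -
    have "(1 + real n / real (q - 1)) * ?T \<le> (1 + 8 * real m ^ 2) * ?T"
      using \<open>real n / real (q - 1) \<le> 8 * real m ^ 2\<close> T0 by (intro mult_right_mono) auto
    then show ?thesis using C by linarith
  qed
  with B have "(\<Sum>i<n. v i (x i)) \<le> (26 * real m ^ 2 + 3) * ?T" by (simp add: algebra_simps)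
  also have "\<dots> \<le> (26 * real m ^ 2 + 3) * (4/3 * ?W)" using A by (intro mult_left_mono) auto
  also have "\<dots> \<le> 36 * real m ^ 2 * ?W"
  proof -
    have "(8::real) ^ 2 \<le> real m ^ 2" using m8 by (intro power_mono) auto
    then have "real m ^ 2 \<ge> 64" by simp
    moreover have "?W \<ge> 0" using A T0 by linarith
    ultimately have "(26 * real m ^ 2 + 3) * (4/3) * ?W \<le> (36 * real m ^ 2) * ?W"
      by (intro mult_right_mono) auto
    then show ?thesis by (simp add: algebra_simps)
  qed
  finally show ?thesis .
qed

lemma m_ge_8: "(m::nat) ^ 3 \<ge> 512 \<Longrightarrow> 8 \<le> m"
proof (rule ccontr)
  assume a: "m ^ 3 \<ge> 512" "\<not> 8 \<le> m"
  then have "m \<le> 7" by simp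
  then have "m ^ 3 \<le> 7 ^ 3" by (rule power_mono) simp
  then show False using a(1) by simp
qed

lemma powr_23: "(m::nat) > 0 \<Longrightarrow> real (m ^ 3) powr (2/3) = real m ^ 2"
proof -
  assume m: "m > 0"
  have "real (m ^ 3) = real m powr 3" using m by (simp add: powr_realpow)
  then have "real (m ^ 3) powr (2/3) = (real m powr 3) powr (2/3)" by (simp only:)
  also have "\<dots> = real m powr (3 * (2/3))" by (rule powr_powr)
  also have "\<dots> = real m powr 2" by simp
  also have "\<dots> = real m ^ 2" using m by (simp add: powr_realpow)
  finally show ?thesis .
qed

theorem theorem7:
  "\<exists>C N0. \<forall>n m v pos Q y.
     n = m ^ 3 \<and> 4 dvd m \<and> n \<ge> N0 \<and> valid_profile n v pos \<and> FPA_run n m pos v Q y \<longrightarrow>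
       (\<forall>i<n. card (Q i) \<le> 2) \<and>
       (\<forall>x. is_matching n x \<longrightarrow>
          welfare n v x \<le> C * real n powr (2/3) * sqrt (log 2 (real n)) * welfare n v y)"
proof (intro exI[of _ "36::real"] exI[of _ "512::nat"] allI impI)
  fix n m v pos Q y
  assume H: "n = m ^ 3 \<and> 4 dvd m \<and> 512 \<le> n \<and> valid_profile n v pos \<and> FPA_run n m pos v Q y"
  then have n: "n = m ^ 3" and m4: "4 dvd m" and n512: "512 \<le> n" and vp: "valid_profile n v pos"
    and run: "FPA_run n m pos v Q y" by auto
  have m8: "8 \<le> m" using m_ge_8 n n512 by simp
  have mpos: "real m > 0" using m8 by simp
  have mn: "m + 1 < n" using m_lt_n[OF m8] n by simp
  define L where "L = log 2 (real n)"
  have L1: "1 \<le> L"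
  proof -
    have "log 2 2 \<le> log 2 (real n)" using n512 by (subst log_le_cancel_iff) auto
    then show ?thesis unfolding L_def by simp
  qed
  have sL: "1 \<le> sqrt L" using L1 by simp
  have pw: "real n powr (2/3) = real m ^ 2" using powr_23[of m] m8 n by simp
  have goal_form: "36 * real n powr (2/3) * sqrt (log 2 (real n)) * W = 36 * real m ^ 2 * sqrt L * W" for W
    unfolding pw L_def by simp
  show "(\<forall>i<n. card (Q i) \<le> 2) \<and>
       (\<forall>x. is_matching n x \<longrightarrow>
          welfare n v x \<le> 36 * real n powr (2/3) * sqrt (log 2 (real n)) * welfare n v y)"
  proof (cases "\<exists>i<n. v i (pos i 1) \<ge> 1 / real m")
    case big: True
    then obtain A R where rr: "(fpa1_step n m pos)\<^sup>*\<^sup>* (1, {..<n}, {(i, pos i 1) | i. i < n}) (Suc n, A, R)"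
      and Q: "Q = (\<lambda>i. {j. (i, j) \<in> R})"
      and mx: "maximizes n (\<lambda>i j. if j \<in> Q i then v i j else 0) y"
      using run unfolding FPA_run_def by auto
    have mx': "maximizes n (\<lambda>i j. if j \<in> {j. (i,j) \<in> R} then v i j else 0) y" using mx Q by simp
    have I2: "Inv2 n pos (Suc n, A, R)" using Inv2_run[OF vp rr] .
    have cardQ: "\<forall>i<n. card (Q i) \<le> 2" using I2 Q unfolding Inv2_def by auto
    let ?W = "welfare n v y"
    let ?k = "fpa_k n m"
    have kdef: "?k = real m / sqrt L" unfolding fpa_k_def L_def by simp
    have kpos: "?k > 0" unfolding kdef using mpos sL by simp
    have Wnn: "?W \<ge> 0" unfolding welfare_def using mx vp_nonneg[OF vp]
      unfolding maximizes_def is_matching_def bij_betw_def by (auto intro!: sum_nonneg)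
    obtain i0 where i0: "i0 < n" "v i0 (pos i0 1) \<ge> 1 / real m" using big by blast
    have R0: "{(i, pos i 1) | i. i < n} \<subseteq> R" using run_mono[OF rr] by simp
    have "(\<Sum>i\<in>{i0}. v i (pos i0 1)) \<le> ?W"
    proof -
      have bx: "bij_betw id {..<n} {..<n}" by simp
      show ?thesis using case1_bound(2)[OF vp bx rr mx' kpos, rule_format, of "{i0}" "\<lambda>_. pos i0 1"] R0 i0(1)
        by auto
    qed
    then have W1: "1 / real m \<le> ?W" using i0 by simp
    show ?thesis
    proof (intro conjI allI impI)
      fix i assume "i < n"
      then show "card (Q i) \<le> 2" using cardQ by blast
    next
      fix x assume "is_matching n x"
      then have x: "bij_betw x {..<n} {..<n}" unfolding is_matching_def .
      have b: "welfare n v x \<le> real n / ?k * ?W + ?k * hsum (Suc n)"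
        using case1_bound(1)[OF vp x rr mx' kpos] unfolding welfare_def .
      have h: "hsum (Suc n) \<le> 2 * L"
      proof -
        have "hsum (Suc n) \<le> 1 + ln (real n)" using hsum_bound[of n] n512 by simp
        moreover have "ln (real n) \<le> L"
        proof -
          have "ln (real n) = L * ln 2" unfolding L_def log_def by simp
          moreover have "ln (2::real) \<le> 1" using ln_le_minus_one[of 2] by simp
          moreover have "L \<ge> 0" using L1 by simp
          ultimately show ?thesis by (metis mult_left_mono mult.right_neutral)
        qed
        ultimately show ?thesis using L1 by simp
      qed
      have t1: "real n / ?k = real m ^ 2 * sqrt L"
        unfolding kdef using n mpos sL by (simp add: power2_eq_square power3_eq_cube field_simps)
      have t2: "?k * hsum (Suc n) \<le> 2 * real m ^ 2 * sqrt L * ?W"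
      proof -
        have "?k * hsum (Suc n) \<le> ?k * (2 * L)" using h kpos by (intro mult_left_mono) auto
        also have "\<dots> = 2 * real m * sqrt L"
          unfolding kdef using sL L1 by (simp add: field_simps real_sqrt_mult[symmetric])
        also have "\<dots> \<le> 2 * real m * sqrt L * (real m * ?W)"
        proof -
          have "1 \<le> real m * ?W" using W1 mpos by (simp add: field_simps)
          moreover have "0 \<le> 2 * real m * sqrt L" using mpos sL by simp
          ultimately show ?thesis by (metis mult_left_mono mult.right_neutral)
        qed
        also have "\<dots> = 2 * real m ^ 2 * sqrt L * ?W" by (simp add: power2_eq_square)
        finally show ?thesis .
      qed
      have "welfare n v x \<le> 3 * real m ^ 2 * sqrt L * ?W" using b t1 t2 by simp
      also have "\<dots> \<le> 36 * real m ^ 2 * sqrt L * ?W"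
        using Wnn sL by (intro mult_right_mono) auto
      finally have "welfare n v x \<le> 36 * real m ^ 2 * sqrt L * ?W" .
      then show "welfare n v x \<le> 36 * real n powr (2/3) * sqrt (log 2 (real n)) * ?W"
        unfolding goal_form .
    qed
  next
    case small: False
    then have sm: "\<forall>i<n. v i (pos i 1) < 1 / real m" by auto
    have Q: "Q = (\<lambda>i. {pos i 1, pos i (m + 1)})" and mx: "maximizes n (fpa2_tilde n m v pos) y"
      using run small unfolding FPA_run_def by auto
    let ?W = "welfare n v y"
    have Wnn: "?W \<ge> 0" unfolding welfare_def using mx vp_nonneg[OF vp]
      unfolding maximizes_def is_matching_def bij_betw_def by (auto intro!: sum_nonneg)
    show ?thesis
    proof (intro conjI allI impI)
      fix i assume "i < n"
      show "card (Q i) \<le> 2" unfolding Q by (simp add: card_insert_if)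
    next
      fix x assume "is_matching n x"
      then have x: "bij_betw x {..<n} {..<n}" unfolding is_matching_def .
      have "welfare n v x \<le> 36 * real m ^ 2 * ?W"
        using case2_bound[OF vp n m8 m4 sm mx x] unfolding welfare_def .
      also have "\<dots> \<le> 36 * real m ^ 2 * sqrt L * ?W"
      proof -
        have "0 \<le> 36 * real m ^ 2 * ?W" using Wnn by simp
        then have "36 * real m ^ 2 * ?W * 1 \<le> 36 * real m ^ 2 * ?W * sqrt L"
          by (rule mult_left_mono[OF sL])
        then show ?thesis by (simp add: ac_simps)
      qed
      finally have "welfare n v x \<le> 36 * real m ^ 2 * sqrt L * ?W" .
      then show "welfare n v x \<le> 36 * real n powr (2/3) * sqrt (log 2 (real n)) * ?W"
        unfolding goal_form .
    qed
  qed
qed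

end
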